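(* Let $m,n$ be natural numbers and let $F_{ij}=\int_{-1}^{1}P_{i-1}(\eta)\,\eta^{j-1}\,d\eta$. For each natural $k$ let $\mathbf f_{k,\bullet}=(F_{k1},\dots,F_{k,n+1})^T$, and let $\mathbf f'=(F_{1,m+1},F_{1,m+2},\dots,F_{1,m+n+1})^T$. Then \[ \mathbf f'=\sum_{i=1}^{m+1}\alpha_i\,\mathbf f_{i,\bullet},\qquad \alpha_i=\frac{2i-1}{2}F_{i,m+1}. \]
   Context: $P_k$ denotes the Legendre polynomial of degree $k$; $F$ is the matrix of moments of the Legendre polynomials. (Note $F_{i,m+1}=0$ whenever $i+m+1$ is odd, so only $i$ of the same parity as $m+1$ contribute.) *)

theory Defs
  imports "HOL-Analysis.Analysis" "HOL-Computational_Algebra.Polynomial"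
begin

fun legendre :: "nat \<Rightarrow> real poly" where
  "legendre 0 = 1"
| "legendre (Suc 0) = [:0, 1:]"
| "legendre (Suc (Suc k)) =
     smult (1 / real (k + 2))
       (smult (real (2 * k + 3)) ([:0, 1:] * legendre (Suc k)) - smult (real (k + 1)) (legendre k))"

definition legendre_moment :: "nat \<Rightarrow> nat \<Rightarrow> real" ("F") where
  "legendre_moment i j = integral {-1..1} (\<lambda>t. poly (legendre (i - 1)) t * t ^ (j - 1))"

end

theory Submission imports Defs begin


definition Lf :: "real poly \<Rightarrow> real" where "Lf p = integral {-1..1} (poly p)"

lemma intg: "(poly p) integrable_on {-1..(1::real)}"
  by (intro integrable_continuous_interval continuous_intros)

lemma Lf_add: "Lf (p + q) = Lf p + Lf q"
proof -
  have e: "poly (p+q) = (\<lambda>x. poly p x + poly q x)" by auto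
  show ?thesis unfolding Lf_def e by (rule integral_add) (simp_all add: intg)
qed
lemma Lf_diff: "Lf (p - q) = Lf p - Lf q"
proof -
  have e: "poly (p-q) = (\<lambda>x. poly p x - poly q x)" by auto
  show ?thesis unfolding Lf_def e by (rule integral_diff) (simp_all add: intg)
qed
lemma Lf_smult: "Lf (smult c p) = c * Lf p"
proof -
  have e: "poly (smult c p) = (\<lambda>x. c * poly p x)" by auto
  show ?thesis unfolding Lf_def e by simp
qed
lemma Lf0: "Lf 0 = 0"
proof -
  have e: "poly 0 = (\<lambda>x::real. 0)" by auto
  show ?thesis unfolding Lf_def e by simp
qed
lemma Lf_sum: "Lf (\<Sum>i\<in>A. f i) = (\<Sum>i\<in>A. Lf (f i))"
  by (induction A rule: infinite_finite_induct) (auto simp: Lf_add Lf0)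

definition mom :: "nat \<Rightarrow> real" where "mom j = (if even j then 2 / real (j+1) else 0)"

lemma Lf_xpow: "Lf ([:0,1:]^j) = mom j"
proof -
  have "((\<lambda>t::real. t^j) has_integral ((\<lambda>x. x^Suc j / Suc j) 1 - (\<lambda>x. x^Suc j / Suc j) (-1))) {-1..1}"
    apply (rule fundamental_theorem_of_calculus)
     apply simp
    apply (subst has_real_derivative_iff_has_vector_derivative[symmetric])
    apply (rule derivative_eq_intros refl | simp)+
    done
  then have "integral {-1..1} (\<lambda>t::real. t^j) = (1 - (-1)^Suc j) / Suc j"
    by (simp add: integral_unique add_divide_distrib)
  moreover have "poly ([:0,1:]^j) = (\<lambda>t::real. t^j)" by (auto simp: poly_power)
  ultimately show ?thesis unfolding Lf_def mom_def by auto
qed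

definition M :: "nat \<Rightarrow> nat \<Rightarrow> real" where "M k j = Lf (legendre k * [:0,1:]^j)"

lemma M0: "M 0 j = mom j" by (simp add: M_def Lf_xpow)
lemma M1: "M 1 j = mom (Suc j)"
  by (simp add: M_def Lf_xpow[of "Suc j", symmetric])
lemma Mrec: "M (Suc (Suc k)) j = (1 / real (k+2)) * (real (2*k+3) * M (Suc k) (Suc j) - real (k+1) * M k j)"
proof -
  have e: "[:0,1:] * legendre (Suc k) * [:0,1:]^j = legendre (Suc k) * [:0,1:]^(Suc j)"
    by (simp add: algebra_simps)
  show ?thesis unfolding M_def
    by (simp only: legendre.simps ring_distribs left_diff_distrib mult_smult_left Lf_smult Lf_diff e mult.assoc[symmetric])
qed



definition C :: "nat \<Rightarrow> nat \<Rightarrow> real" where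
 "C k j = (if k \<le> j \<and> even (j - k) then 2^(k+1) * fact j * fact ((j+k) div 2) / (fact ((j-k) div 2) * fact (j+k+1)) else 0)"

lemma Cform: "C k (k + 2*r) = 2^(k+1) * fact (k+2*r) * fact (k+r) / (fact r * fact (2*k+2*r+1))"
proof -
  have "(k + 2*r + k) div 2 = k + r" by simp
  moreover have "(k+2*r - k) div 2 = r" by simp
  moreover have "k + 2*r + k + 1 = 2*k+2*r+1" by simp
  ultimately show ?thesis unfolding C_def by simp
qed

lemma Czero: "j < k \<or> odd (j - k) \<Longrightarrow> C k j = 0"
  unfolding C_def by auto

lemma fSuc: "(fact (Suc n) :: real) = real (Suc n) * fact n" by simp

lemma Crec: "C (Suc (Suc k)) j = (1 / real (k+2)) * (real (2*k+3) * C (Suc k) (Suc j) - real (k+1) * C k j)"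
proof (cases "j < k \<or> odd (j - k)")
  case True
  then have "j < Suc (Suc k) \<or> odd (j - Suc (Suc k))" by auto
  moreover have "Suc j < Suc k \<or> odd (Suc j - Suc k)" using True by auto
  ultimately show ?thesis using True by (simp add: Czero)
next
  case False
  then obtain r where j: "j = k + 2*r" by (metis dvd_def le_add_diff_inverse not_le)
  show ?thesis
  proof (cases r)
    case 0
    have a: "C (Suc (Suc k)) j = 0" using j 0 by (simp add: Czero)
    have b: "C (Suc k) (Suc j) = 2^(k+2) * fact (k+1) * fact (k+1) / (fact (2*k+3))"
      using Cform[of "Suc k" 0] j 0 by (simp add: numeral_eq_Suc)
    have c: "C k j = 2^(k+1) * fact k * fact k / (fact (2*k+1))"
      using Cform[of k 0] j 0 by simp
    have f1: "(fact (k+1)::real) = real (k+1) * fact k" by (simp add: algebra_simps)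
    have f2: "(fact (2*k+3)::real) = real (2*k+3) * real (2*k+2) * fact (2*k+1)"
      by (simp add: numeral_eq_Suc algebra_simps)
    have g: "\<And>Q D::real. D > 0 \<Longrightarrow> 0 = 1/real (k+2) * (real (2*k+3) * (2^(k+2) * (real (k+1)*Q) * (real (k+1)*Q) / (real (2*k+3) * real (2*k+2) * D)) - real (k+1) * (2^(k+1) * Q * Q / D))"
    proof -
      fix Q D :: real assume h: "D > 0"
      define x where "x = real k"
      have n: "x+2 \<noteq> 0" "2*x+3 \<noteq> 0" "2*x+2 \<noteq> 0" "D \<noteq> 0" "(2*x+3)*(2*x+2)*D \<noteq> 0" using h by (auto simp: x_def)
      have "(2*x+3) * (2^(k+2) * ((x+1)*Q) * ((x+1)*Q) / ((2*x+3)*(2*x+2)*D)) = (x+1) * (2^(k+1) * Q * Q / D)"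
        using n by (simp add: field_simps power_Suc; simp add: algebra_simps)
      then show "0 = 1/real (k+2) * (real (2*k+3) * (2^(k+2) * (real (k+1)*Q) * (real (k+1)*Q) / (real (2*k+3) * real (2*k+2) * D)) - real (k+1) * (2^(k+1) * Q * Q / D))"
        by (simp add: x_def algebra_simps)
    qed
    have "(fact (2*k+1)::real) > 0" by simp
    from g[OF this, of "fact k"] show ?thesis unfolding a b c f1 f2 .
  next
    case (Suc s)
    have a: "C (Suc (Suc k)) j = 2^(k+3) * fact (k+2* s+2) * fact (k+s+2) / (fact s * fact (2*k+2* s+5))"
      using Cform[of "Suc (Suc k)" s] j Suc by (simp add: numeral_eq_Suc algebra_simps)
    have b: "C (Suc k) (Suc j) = 2^(k+2) * fact (k+2* s+3) * fact (k+s+2) / (fact (Suc s) * fact (2*k+2* s+5))"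
      using Cform[of "Suc k" "Suc s"] j Suc by (simp add: numeral_eq_Suc algebra_simps)
    have c: "C k j = 2^(k+1) * fact (k+2* s+2) * fact (k+s+1) / (fact (Suc s) * fact (2*k+2* s+3))"
      using Cform[of k "Suc s"] j Suc by (simp add: numeral_eq_Suc algebra_simps)
    have f1: "(fact (k+2* s+3)::real) = real (k+2* s+3) * fact (k+2* s+2)" by (simp add: numeral_eq_Suc)
    have f2: "(fact (k+s+2)::real) = real (k+s+2) * fact (k+s+1)" by (simp add: numeral_eq_Suc)
    have f3: "(fact (Suc s)::real) = real (s+1) * fact s" by simp
    have f4: "(fact (2*k+2* s+5)::real) = real (2*k+2* s+5) * real (2*k+2* s+4) * fact (2*k+2* s+3)"
      by (simp add: numeral_eq_Suc algebra_simps)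
    have g: "\<And>A B S D::real. D > 0 \<Longrightarrow> S > 0 \<Longrightarrow>
      2^(k+3) * A * (real (k+s+2)*B) / (S * (real (2*k+2* s+5) * real (2*k+2* s+4) * D)) = 1/real (k+2) * (real (2*k+3) * (2^(k+2) * (real (k+2* s+3)*A) * (real (k+s+2)*B) / ((real (s+1)*S) * (real (2*k+2* s+5) * real (2*k+2* s+4) * D))) - real (k+1) * (2^(k+1) * A * B / ((real (s+1)*S) * D)))"
    proof -
      fix A B S D :: real assume h: "D > 0" "S > 0"
      define x where "x = real k"
      define y where "y = real s"
      have h2: "x \<ge> 0" "y \<ge> 0" by (auto simp: x_def y_def)
      have n: "x+2 \<noteq> 0" "2*x+2*y+5 \<noteq> 0" "2*x+2*y+4 \<noteq> 0" "D \<noteq> 0" "S \<noteq> 0" "y+1 \<noteq> 0"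
        "S * ((2*x+2*y+5)*(2*x+2*y+4)*D) \<noteq> 0" "((y+1)*S) * ((2*x+2*y+5)*(2*x+2*y+4)*D) \<noteq> 0" "((y+1)*S) * D \<noteq> 0" using h h2 by auto
      define W where "W = (2*x+2*y+5)*(2*x+2*y+4)"
      define P where "P = 2^(k+1)*A*B/(S*D)"
      have Wp: "W > 0" using h2 by (simp add: W_def)
      have pid: "4*(x+y+2)*(x+2)*(y+1) = 2*(2*x+3)*(x+2*y+3)*(x+y+2) - (x+1)*W"
        by (simp add: W_def algebra_simps)
      have R: "4*(x+y+2)/W = 1/(x+2)*((2*x+3)*(2*(x+2*y+3)*(x+y+2)/((y+1)*W)) - (x+1)/(y+1))"
      proof -
        have nz: "(y+1)*W \<noteq> 0" "(x+2)*((y+1)*W) \<noteq> 0" "x+2 \<noteq> 0" "y+1 \<noteq> 0" "W \<noteq> 0" using Wp h2 by auto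
        have q1: "(x+1)/(y+1) = ((x+1)*W)/((y+1)*W)" using nz by simp
        have q2: "(2*x+3)*(2*(x+2*y+3)*(x+y+2)/((y+1)*W)) = (2*(2*x+3)*(x+2*y+3)*(x+y+2))/((y+1)*W)" by (simp add: algebra_simps)
        have "1/(x+2)*((2*x+3)*(2*(x+2*y+3)*(x+y+2)/((y+1)*W)) - (x+1)/(y+1)) = (2*(2*x+3)*(x+2*y+3)*(x+y+2) - (x+1)*W)/((x+2)*((y+1)*W))"
          unfolding q1 q2 diff_divide_distrib[symmetric] by simp
        also have "\<dots> = (4*(x+y+2)*(x+2)*(y+1))/((x+2)*((y+1)*W))" using pid by simp
        also have "\<dots> = 4*(x+y+2)/W" using nz by (simp add: ac_simps)
        finally show ?thesis by simp
      qed
      have e1: "2^(k+3) * A * ((x+y+2)*B) / (S * ((2*x+2*y+5)*(2*x+2*y+4)*D)) = P * (4*(x+y+2)/W)"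
        using h Wp unfolding P_def W_def[symmetric] by (simp add: field_simps power_add)
      have e2: "2^(k+2) * ((x+2*y+3)*A) * ((x+y+2)*B) / (((y+1)*S) * ((2*x+2*y+5)*(2*x+2*y+4)*D)) = P * (2*(x+2*y+3)*(x+y+2)/((y+1)*W))"
        using h Wp h2 unfolding P_def W_def[symmetric] by (simp add: field_simps power_add)
      have e3: "2^(k+1) * A * B / (((y+1)*S) * D) = P / (y+1)"
        using h h2 unfolding P_def by (simp add: field_simps)
      have "2^(k+3) * A * ((x+y+2)*B) / (S * ((2*x+2*y+5)*(2*x+2*y+4)*D)) = 1/(x+2) * ((2*x+3) * (2^(k+2) * ((x+2*y+3)*A) * ((x+y+2)*B) / (((y+1)*S) * ((2*x+2*y+5)*(2*x+2*y+4)*D))) - (x+1) * (2^(k+1) * A * B / (((y+1)*S) * D)))"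
        unfolding e1 e2 e3 R by (simp add: algebra_simps)
      then show "2^(k+3) * A * (real (k+s+2)*B) / (S * (real (2*k+2* s+5) * real (2*k+2* s+4) * D)) = 1/real (k+2) * (real (2*k+3) * (2^(k+2) * (real (k+2* s+3)*A) * (real (k+s+2)*B) / ((real (s+1)*S) * (real (2*k+2* s+5) * real (2*k+2* s+4) * D))) - real (k+1) * (2^(k+1) * A * B / ((real (s+1)*S) * D)))"
        by (simp add: x_def y_def algebra_simps)
    qed
    have "(fact (2*k+2* s+3)::real) > 0" "(fact s::real) > 0" by simp_all
    from g[OF this, of "fact (k+2* s+2)" "fact (k+s+1)"] show ?thesis unfolding a b c f1 f2 f3 f4 .
  qed
qed



lemma C0: "C 0 j = mom j"
proof (cases "even j")
  case True
  then obtain r where j: "j = 0 + 2*r" by auto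
  have f: "(fact (2*r+1)::real) = real (2*r+1) * fact (2*r)" by simp
  show ?thesis using Cform[of 0 r] True unfolding j mom_def f by (simp add: divide_simps)
next
  case False then show ?thesis by (simp add: Czero mom_def)
qed

lemma C1: "C 1 j = mom (Suc j)"
proof (cases "j \<ge> 1 \<and> odd j")
  case True
  then obtain r where j: "j = 1 + 2*r" by (metis add.commute oddE)
  have f1: "(fact (1+2*r)::real) = real (2*r+1) * fact (2*r)" by simp
  have f2: "(fact (1+r)::real) = real (r+1) * fact r" by simp
  have f3: "(fact (2*1+2*r+1)::real) = real (2*r+3) * real (2*r+2) * real (2*r+1) * fact (2*r)"
    by (simp add: numeral_eq_Suc algebra_simps)
  have "C 1 j = 2^2 * (real (2*r+1) * fact (2*r)) * (real (r+1) * fact r) / (fact r * (real (2*r+3) * real (2*r+2) * real (2*r+1) * fact (2*r)))"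
    using Cform[of 1 r] unfolding j f1 f2 f3 by simp
  also have "\<dots> = 2 / real (2*r+3)" by (simp add: divide_simps; simp add: algebra_simps)
  finally show ?thesis unfolding mom_def j by (simp add: algebra_simps)
next
  case False
  then have "j < 1 \<or> odd (j - 1)" by auto
  then show ?thesis using False by (auto simp: Czero mom_def)
qed

lemma MC: "M k j = C k j"
proof (induction k arbitrary: j rule: legendre.induct)
  case 1 then show ?case by (simp add: M0 C0)
next
  case 2 then show ?case using M1 C1 by simp
next
  case (3 k) then show ?case by (simp add: Mrec Crec)
qed

definition lc :: "nat \<Rightarrow> real" where "lc k = fact (2*k) / (2^k * fact k ^ 2)"

lemma lc_pos: "lc k > 0" unfolding lc_def by simp

lemma lc_rec: "lc (Suc (Suc k)) = real (2*k+3) / real (k+2) * lc (Suc k)"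
proof -
  have f1: "(fact (2*Suc (Suc k))::real) = real (2*k+4) * real (2*k+3) * fact (2 * Suc k)"
    by (simp add: numeral_eq_Suc algebra_simps)
  have f2: "(fact (Suc (Suc k))::real) = real (k+2) * fact (Suc k)"
    by (simp add: numeral_eq_Suc algebra_simps)
  have p: "(fact (Suc k)::real) > 0" "(fact (2*Suc k)::real) > 0" by simp_all
  define A where "A = (fact (Suc k)::real)"
  define B where "B = (fact (2*Suc k)::real)"
  have pA: "A > 0" "B > 0" using p by (simp_all add: A_def B_def)
  have "real (2*k+4) * real (2*k+3) * B / (2^Suc (Suc k) * (real (k+2) * A)^2) = real (2*k+3) / real (k+2) * (B / (2^Suc k * A^2))"
    using pA by (simp add: divide_simps power2_eq_square; simp add: algebra_simps)
  then show ?thesis unfolding lc_def f1 f2 A_def B_def .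
qed

lemma coeff_leg: "(\<forall>j>k. coeff (legendre k) j = 0) \<and> coeff (legendre k) k = lc k"
proof (induction k rule: legendre.induct)
  case 1 then show ?case by (simp add: lc_def)
next
  case 2 then show ?case by (auto simp: lc_def coeff_pCons split: nat.splits)
next
  case (3 k)
  have a: "\<forall>j>Suc (Suc k). coeff (legendre (Suc (Suc k))) j = 0"
  proof (intro allI impI)
    fix j assume "j > Suc (Suc k)"
    then obtain i where j: "j = Suc i" "i > Suc k" by (cases j) auto
    then show "coeff (legendre (Suc (Suc k))) j = 0" using 3 by (simp add: coeff_pCons)
  qed
  have "coeff (legendre (Suc (Suc k))) (Suc (Suc k)) = 1 / real (k+2) * (real (2*k+3) * lc (Suc k))"
    using 3 by (simp add: coeff_pCons)
  then show ?case using a lc_rec by simp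
qed

lemma deg_leg: "degree (legendre k) \<le> k"
  using coeff_leg by (intro degree_le) auto

lemma Lf_expand: "degree q \<le> N \<Longrightarrow> Lf (p * q) = (\<Sum>i\<le>N. coeff q i * Lf (p * [:0,1:]^i))"
proof -
  assume d: "degree q \<le> N"
  have "p * q = p * (\<Sum>i\<le>N. monom (coeff q i) i)" using poly_as_sum_of_monoms'[OF d] by simp
  also have "\<dots> = (\<Sum>i\<le>N. smult (coeff q i) (p * [:0,1:]^i))"
    by (simp add: sum_distrib_left monom_altdef)
  finally show ?thesis by (simp add: Lf_sum Lf_smult)
qed

lemma orth: "degree q < k \<Longrightarrow> Lf (legendre k * q) = 0"
proof -
  assume d: "degree q < k"
  have "Lf (legendre k * q) = (\<Sum>i\<le>degree q. coeff q i * M k i)"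
    using Lf_expand[of q "degree q" "legendre k"] by (simp add: M_def)
  also have "\<dots> = 0" using d by (intro sum.neutral) (auto simp: MC Czero)
  finally show ?thesis .
qed

lemma norm: "Lf (legendre k * legendre k) = 2 / real (2*k+1)"
proof -
  have "Lf (legendre k * legendre k) = (\<Sum>i\<le>k. coeff (legendre k) i * M k i)"
    using Lf_expand[OF deg_leg, of "legendre k"] by (simp add: M_def)
  also have "\<dots> = coeff (legendre k) k * M k k + (\<Sum>i<k. coeff (legendre k) i * M k i)"
    by (simp add: lessThan_Suc_atMost[symmetric])
  also have "(\<Sum>i<k. coeff (legendre k) i * M k i) = 0" by (intro sum.neutral) (auto simp: MC Czero)
  also have "coeff (legendre k) k * M k k = lc k * C k k" using coeff_leg MC by simp
  also have "\<dots> = 2 / real (2*k+1)"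
  proof -
    have c: "C k k = 2^(k+1) * fact k * fact k / fact (2*k+1)" using Cform[of k 0] by simp
    have f: "(fact (2*k+1)::real) = real (2*k+1) * fact (2*k)" by simp
    have p: "(fact (2*k)::real) > 0" "(fact k::real) > 0" by simp_all
    show ?thesis unfolding lc_def c f using p by (simp add: divide_simps power2_eq_square; simp add: algebra_simps)
  qed
  finally show ?thesis by simp
qed

lemma span: "degree q \<le> m \<Longrightarrow> \<exists>a. q = (\<Sum>i\<le>m. smult (a i) (legendre i))"
proof (induction m arbitrary: q)
  case 0
  then have "q = [:coeff q 0:]" by (metis degree_0_id le_zero_eq)
  then show ?case by (intro exI[where x="\<lambda>_. coeff q 0"]) simp
next
  case (Suc m)
  define b where "b = coeff q (Suc m) / lc (Suc m)"
  define q' where "q' = q - smult b (legendre (Suc m))"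
  have "degree q' \<le> m"
  proof (rule degree_le, intro allI impI)
    fix j assume j: "m < j"
    show "coeff q' j = 0"
    proof (cases "j = Suc m")
      case True
      then show ?thesis using coeff_leg[of "Suc m"] lc_pos[of "Suc m"] by (simp add: q'_def b_def)
    next
      case False
      then have "j > Suc m" using j by simp
      then show ?thesis using coeff_leg[of "Suc m"] Suc.prems by (simp add: q'_def coeff_eq_0)
    qed
  qed
  then obtain a where a: "q' = (\<Sum>i\<le>m. smult (a i) (legendre i))" using Suc.IH by blast
  define a' where "a' = a(Suc m := b)"
  have "q = q' + smult b (legendre (Suc m))" by (simp add: q'_def)
  also have "\<dots> = (\<Sum>i\<le>m. smult (a' i) (legendre i)) + smult (a' (Suc m)) (legendre (Suc m))"
    unfolding a a'_def by (intro arg_cong2[where f="(+)"] sum.cong) auto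
  also have "\<dots> = (\<Sum>i\<le>Suc m. smult (a' i) (legendre i))" by simp
  finally show ?case by blast
qed



lemma FM: "F i j = M (i - 1) (j - 1)"
proof -
  have "(\<lambda>t. poly (legendre (i - 1)) t * t ^ (j - 1)) = poly (legendre (i - 1) * [:0,1:]^(j - 1))"
    by (auto simp: poly_power)
  then show ?thesis unfolding legendre_moment_def M_def Lf_def by simp
qed

lemma orth2: "i \<noteq> l \<Longrightarrow> Lf (legendre l * legendre i) = 0"
proof (cases "i < l")
  case True
  then show ?thesis using orth[of "legendre i" l] deg_leg[of i] by simp
next
  case False
  assume "i \<noteq> l"
  with False have "l < i" by simp
  then show ?thesis using orth[of "legendre l" i] deg_leg[of l] by (simp add: mult.commute)
qed

theorem mainTheorem10:
  fixes m n :: nat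
  shows "\<forall>j \<in> {1..n+1}.
           F 1 (m + j) = (\<Sum>i = 1..m+1. ((2 * real i - 1) / 2 * F i (m + 1)) * F i j)"
proof
  fix j assume "j \<in> {1..n+1}"
  then obtain jj where j: "j = Suc jj" by (cases j) auto
  obtain a where a: "[:0,1:]^m = (\<Sum>i\<le>m. smult (a i) (legendre i))"
    using span[of "[:0,1::real:]^m" m] by (auto simp: degree_power_eq)
  have coef: "a l = (2 * real l + 1) / 2 * M l m" if l: "l \<le> m" for l
  proof -
    have "M l m = Lf (legendre l * (\<Sum>i\<le>m. smult (a i) (legendre i)))" unfolding M_def a ..
    also have "\<dots> = (\<Sum>i\<le>m. a i * Lf (legendre l * legendre i))"
      by (simp add: sum_distrib_left Lf_sum Lf_smult)
    also have "\<dots> = (\<Sum>i\<le>m. if i = l then a l * (2 / real (2*l+1)) else 0)"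
      by (intro sum.cong) (auto simp: orth2 norm)
    also have "\<dots> = a l * (2 / real (2*l+1))" using l by simp
    finally show ?thesis by (simp add: field_simps)
  qed
  have "F 1 (m + j) = M 0 (m + jj)" by (simp add: FM j)
  also have "\<dots> = Lf ((\<Sum>i\<le>m. smult (a i) (legendre i)) * [:0,1:]^jj)"
    unfolding M_def a[symmetric] by (simp add: power_add)
  also have "\<dots> = (\<Sum>i\<le>m. a i * M i jj)"
    by (simp add: sum_distrib_right Lf_sum Lf_smult M_def)
  also have "\<dots> = (\<Sum>i\<le>m. ((2 * real i + 1) / 2 * M i m) * M i jj)"
    by (intro sum.cong) (auto simp: coef)
  also have "\<dots> = (\<Sum>i = 0..m. ((2 * real (Suc i) - 1) / 2 * F (Suc i) (m + 1)) * F (Suc i) j)"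
    by (simp add: FM j atLeast0AtMost algebra_simps)
  also have "\<dots> = (\<Sum>i = 1..m+1. ((2 * real i - 1) / 2 * F i (m + 1)) * F i j)"
    using sum.shift_bounds_cl_Suc_ivl[of "\<lambda>i. ((2 * real i - 1) / 2 * F i (m + 1)) * F i j" 0 m] by simp
  finally show "F 1 (m + j) = (\<Sum>i = 1..m+1. ((2 * real i - 1) / 2 * F i (m + 1)) * F i j)" .
qed

end
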